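(* Let $r,\tilde r:\mathcal S\times\mathcal A\times\mathcal B\to[0,1]$, let $\pi$ be a leader policy with $\pi(\cdot\mid s,b)\in\Delta(\mathcal A)$, and set $r^\pi(s,b)=\sum_a\pi(a\mid s,b)r(s,a,b)$, $\tilde r^\pi(s,b)=\sum_a\pi(a\mid s,b)\tilde r(s,a,b)$, $\nu(b\mid s)\propto\exp(\eta r^\pi(s,b))$ and $\tilde\nu(b\mid s)\propto\exp(\eta\tilde r^\pi(s,b))$. Then for every $s\in\mathcal S$, $$D_{\rm TV}\bigl(\nu(\cdot\mid s),\tilde\nu(\cdot\mid s)\bigr)\le\eta\,\mathbb E_s\Bigl[\bigl|(\tilde r^\pi-r^\pi)(s,b)-\mathbb E_s[(\tilde r^\pi-r^\pi)(s,b)]\bigr|\Bigr]+C^{(3)}\,\mathbb E_s\Bigl[\bigl((\tilde r^\pi-r^\pi)(s,b)-\mathbb E_s[(\tilde r^\pi-r^\pi)(s,b)]\bigr)^2\Bigr],$$ where $\mathbb E_s$ is the expectation over $b\sim\nu(\cdot\mid s)$, $C^{(3)}=\frac{\eta^2e^{2\eta B_A}}{2}\bigl(2+\eta B_Ae^{2\eta B_A}\bigr)$ and $B_A=2+2\eta^{-1}\log|\mathcal B|$.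
   Context: $\mathcal S$ state space, $\mathcal A,\mathcal B$ action sets ($\mathcal B$ finite), $\eta>0$. $D_{\rm TV}(p,q)=\frac12\|p-q\|_1$. *)

theory Defs
  imports "HOL-Probability.Probability"
begin

definition avg_reward :: "('s \<Rightarrow> 'b \<Rightarrow> 'a pmf) \<Rightarrow> ('s \<Rightarrow> 'a \<Rightarrow> 'b \<Rightarrow> real) \<Rightarrow> 's \<Rightarrow> 'b \<Rightarrow> real" where
  "avg_reward \<pi> r s b = measure_pmf.expectation (\<pi> s b) (\<lambda>a. r s a b)"

definition softmax_resp :: "real \<Rightarrow> ('s \<Rightarrow> 'b::finite \<Rightarrow> real) \<Rightarrow> 's \<Rightarrow> 'b \<Rightarrow> real" where
  "softmax_resp \<eta> f s b = exp (\<eta> * f s b) / (\<Sum>b'\<in>UNIV. exp (\<eta> * f s b'))"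

definition tv_dist :: "('b::finite \<Rightarrow> real) \<Rightarrow> ('b \<Rightarrow> real) \<Rightarrow> real" where
  "tv_dist p q = (1/2) * (\<Sum>b\<in>UNIV. \<bar>p b - q b\<bar>)"

definition fexp :: "('b::finite \<Rightarrow> real) \<Rightarrow> ('b \<Rightarrow> real) \<Rightarrow> real" where
  "fexp p g = (\<Sum>b\<in>UNIV. p b * g b)"

end

theory Submission imports Defs begin
lemma pmf_exp_bounds:
  fixes p :: "'a pmf" assumes "\<And>a. 0 \<le> f a \<and> f a \<le> (1::real)"
  shows "0 \<le> measure_pmf.expectation p f \<and> measure_pmf.expectation p f \<le> 1"
proof -
  have int: "integrable (measure_pmf p) f"
    by (rule measure_pmf.integrable_const_bound[where B=1]) (use assms in auto)
  show ?thesis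
    using assms by (auto intro!: integral_nonneg_AE measure_pmf.integral_le_const int)
qed

lemma exp_h: fixes x :: real
  shows "0 \<le> exp x - 1 - x \<and> exp x - 1 - x \<le> x^2 * exp \<bar>x\<bar>"
proof -
  have a: "1 + x \<le> exp x" by (rule exp_ge_add_one_self)
  have b0: "1 - x \<le> exp (-x)" using exp_ge_add_one_self[of "-x"] by simp
  have b: "exp x - 1 \<le> x * exp x"
  proof -
    have "exp x * (1 - x) \<le> exp x * exp (-x)" using b0 by (intro mult_left_mono) auto
    also have "\<dots> = 1" by (simp add: exp_minus)
    finally show ?thesis by (simp add: algebra_simps)
  qed
  have "exp x - 1 - x \<le> x^2 * exp \<bar>x\<bar>"
  proof (cases "x \<ge> 0")
    case True
    have "exp x - 1 - x \<le> x * exp x - x" using b by simp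
    also have "\<dots> = x * (exp x - 1)" by (simp add: algebra_simps)
    also have "\<dots> \<le> x * (x * exp x)" using b True by (intro mult_left_mono) auto
    finally show ?thesis using True by (simp add: power2_eq_square)
  next
    case False
    have "exp x - 1 - x \<le> x * exp x - x" using b by simp
    also have "\<dots> = (-x) * (1 - exp x)" by (simp add: algebra_simps)
    also have "\<dots> \<le> (-x) * (-x)" using a False by (intro mult_left_mono) linarith+
    also have "\<dots> = x^2 * 1" by (simp add: power2_eq_square)
    also have "\<dots> \<le> x^2 * exp \<bar>x\<bar>" by (intro mult_left_mono) auto
    finally show ?thesis .
  qed
  with a show ?thesis by linarith
qed
lemma core:
  fixes F G :: "'b::finite \<Rightarrow> real" and \<eta> :: real
  assumes eta: "\<eta> > 0" and dG: "\<And>b. \<bar>G b - F b\<bar> \<le> 1"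
  defines "S \<equiv> (\<Sum>b\<in>UNIV. exp (\<eta> * F b))"
  defines "\<nu> \<equiv> (\<lambda>b. exp (\<eta> * F b) / S)"
  defines "\<nu>t \<equiv> (\<lambda>b. exp (\<eta> * G b) / (\<Sum>b'\<in>UNIV. exp (\<eta> * G b')))"
  defines "d \<equiv> (\<lambda>b. G b - F b)"
  defines "m \<equiv> fexp \<nu> d"
  shows "tv_dist \<nu> \<nu>t \<le> \<eta> * fexp \<nu> (\<lambda>b. \<bar>d b - m\<bar>) + \<eta>^2 * exp (2*\<eta>) * fexp \<nu> (\<lambda>b. (d b - m)^2)"
proof -
  have Spos: "S > 0" unfolding S_def by (intro sum_pos) auto
  have nupos: "\<nu> b > 0" for b unfolding \<nu>_def using Spos by auto
  have nusum: "(\<Sum>b\<in>UNIV. \<nu> b) = 1" unfolding \<nu>_def using Spos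
    by (simp add: sum_divide_distrib[symmetric] S_def)
  have mb: "\<bar>m\<bar> \<le> 1"
  proof -
    have "\<bar>m\<bar> \<le> (\<Sum>b\<in>UNIV. \<bar>\<nu> b * d b\<bar>)" unfolding m_def fexp_def by (rule sum_abs)
    also have "\<dots> \<le> (\<Sum>b\<in>UNIV. \<nu> b * 1)"
      using nupos dG unfolding d_def by (intro sum_mono) (simp add: abs_mult mult_left_mono less_imp_le)
    finally show ?thesis using nusum by simp
  qed
  define x where "x b = \<eta> * (d b - m)" for b
  have xb: "\<bar>x b\<bar> \<le> 2*\<eta>" for b
  proof -
    have "\<bar>d b - m\<bar> \<le> 2" using dG[of b] mb unfolding d_def by linarith
    then have "\<eta> * \<bar>d b - m\<bar> \<le> \<eta> * 2" using eta by (intro mult_left_mono) auto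
    then show ?thesis unfolding x_def using eta by (simp add: abs_mult)
  qed
  have xsum: "(\<Sum>b\<in>UNIV. \<nu> b * x b) = 0"
  proof -
    have "(\<Sum>b\<in>UNIV. \<nu> b * x b) = \<eta> * ((\<Sum>b\<in>UNIV. \<nu> b * d b) - m * (\<Sum>b\<in>UNIV. \<nu> b))"
      unfolding x_def by (simp add: algebra_simps sum_distrib_left sum_subtractf sum_distrib_right)
    then show ?thesis using nusum unfolding m_def fexp_def by simp
  qed
  define h where "h b = exp (x b) - 1 - x b" for b
  define Z where "Z = (\<Sum>b\<in>UNIV. \<nu> b * exp (x b))"
  have Zeq: "Z = 1 + (\<Sum>b\<in>UNIV. \<nu> b * h b)"
  proof -
    have "(\<Sum>b\<in>UNIV. \<nu> b * h b) = Z - (\<Sum>b\<in>UNIV. \<nu> b) - (\<Sum>b\<in>UNIV. \<nu> b * x b)"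
      unfolding h_def Z_def by (simp add: algebra_simps sum_subtractf sum.distrib)
    then show ?thesis using nusum xsum by simp
  qed
  have hnn: "0 \<le> h b" for b unfolding h_def using exp_h[of "x b"] by simp
  have hsum_nn: "0 \<le> (\<Sum>b\<in>UNIV. \<nu> b * h b)"
    using nupos hnn by (intro sum_nonneg) (simp add: less_imp_le)
  have Z1: "Z \<ge> 1" using Zeq hsum_nn by simp
  have nut: "\<nu>t b = \<nu> b * exp (x b) / Z" for b
  proof -
    have e: "exp (\<eta> * G b') = exp (\<eta> * F b') * exp (\<eta> * m) * exp (x b')" for b'
    proof -
      have "\<eta> * G b' = \<eta> * F b' + \<eta> * m + x b'" unfolding x_def d_def by (simp add: algebra_simps)
      then show ?thesis by (simp add: exp_add)
    qed
    have den: "(\<Sum>b'\<in>UNIV. exp (\<eta> * G b')) = exp (\<eta> * m) * S * Z"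
    proof -
      have "(\<Sum>b'\<in>UNIV. exp (\<eta> * G b')) = (\<Sum>b'\<in>UNIV. exp (\<eta> * m) * S * (\<nu> b' * exp (x b')))"
        using e Spos unfolding \<nu>_def by (intro sum.cong) auto
      then show ?thesis unfolding Z_def by (simp add: sum_distrib_left)
    qed
    have "\<nu>t b = exp (\<eta> * F b) * exp (\<eta> * m) * exp (x b) / (exp (\<eta> * m) * S * Z)"
      unfolding \<nu>t_def den using e[of b] by simp
    then show ?thesis unfolding \<nu>_def using Spos Z1 by (simp add: field_simps)
  qed
  have pt: "\<bar>\<nu> b - \<nu>t b\<bar> \<le> \<nu> b * ((Z - 1) + \<bar>x b\<bar> + h b)" for b
  proof -
    have "\<bar>\<nu> b - \<nu>t b\<bar> = \<nu> b * (\<bar>Z - exp (x b)\<bar> / Z)"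
      proof -
      have "\<nu> b - \<nu>t b = \<nu> b * ((Z - exp (x b)) / Z)" unfolding nut using Z1 by (simp add: field_simps)
      then show ?thesis using Z1 nupos[of b] by (simp add: abs_mult)
    qed
    also have "\<dots> \<le> \<nu> b * \<bar>Z - exp (x b)\<bar>"
      using Z1 nupos[of b] mult_left_mono[of 1 Z "\<bar>Z - exp (x b)\<bar>"] by (intro mult_left_mono) (auto simp: divide_le_eq)
    also have "\<dots> \<le> \<nu> b * ((Z - 1) + \<bar>x b\<bar> + h b)"
      using Z1 nupos[of b] hnn[of b] unfolding h_def by (intro mult_left_mono) auto
    finally show ?thesis .
  qed
  have "tv_dist \<nu> \<nu>t \<le> (1/2) * (\<Sum>b\<in>UNIV. \<nu> b * ((Z - 1) + \<bar>x b\<bar> + h b))"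
    unfolding tv_dist_def using pt by (intro mult_left_mono sum_mono) auto
  also have "\<dots> = (1/2) * ((Z - 1) + (\<Sum>b\<in>UNIV. \<nu> b * \<bar>x b\<bar>) + (\<Sum>b\<in>UNIV. \<nu> b * h b))"
  proof -
    have "(\<Sum>b\<in>UNIV. \<nu> b * ((Z - 1) + \<bar>x b\<bar> + h b)) = (\<Sum>b\<in>UNIV. (Z-1) * \<nu> b) + (\<Sum>b\<in>UNIV. \<nu> b * \<bar>x b\<bar>) + (\<Sum>b\<in>UNIV. \<nu> b * h b)"
      by (simp add: distrib_left sum.distrib mult.commute)
    also have "(\<Sum>b\<in>UNIV. (Z-1) * \<nu> b) = Z - 1" using nusum by (simp add: sum_distrib_left[symmetric])
    finally show ?thesis by simp
  qed
  also have "\<dots> = (1/2) * (\<Sum>b\<in>UNIV. \<nu> b * \<bar>x b\<bar>) + (\<Sum>b\<in>UNIV. \<nu> b * h b)"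
    using Zeq by simp
  also have "\<dots> \<le> \<eta> * fexp \<nu> (\<lambda>b. \<bar>d b - m\<bar>) + \<eta>^2 * exp (2*\<eta>) * fexp \<nu> (\<lambda>b. (d b - m)^2)"
  proof (rule add_mono)
    have "(\<Sum>b\<in>UNIV. \<nu> b * \<bar>x b\<bar>) = \<eta> * fexp \<nu> (\<lambda>b. \<bar>d b - m\<bar>)"
      unfolding fexp_def x_def using eta by (simp add: abs_mult sum_distrib_left mult.left_commute)
    moreover have "0 \<le> fexp \<nu> (\<lambda>b. \<bar>d b - m\<bar>)"
      unfolding fexp_def using nupos by (intro sum_nonneg) (simp add: less_imp_le)
    ultimately show "(1/2) * (\<Sum>b\<in>UNIV. \<nu> b * \<bar>x b\<bar>) \<le> \<eta> * fexp \<nu> (\<lambda>b. \<bar>d b - m\<bar>)"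
      using eta by (simp add: mult_nonneg_nonneg)
  next
    have "h b \<le> \<eta>^2 * exp (2*\<eta>) * (d b - m)^2" for b
    proof -
      have "h b \<le> (x b)^2 * exp \<bar>x b\<bar>" unfolding h_def using exp_h[of "x b"] by simp
      also have "\<dots> \<le> (x b)^2 * exp (2*\<eta>)" using xb[of b] by (intro mult_left_mono) auto
      also have "\<dots> = \<eta>^2 * exp (2*\<eta>) * (d b - m)^2" unfolding x_def by (simp add: power_mult_distrib)
      finally show ?thesis .
    qed
    then have "(\<Sum>b\<in>UNIV. \<nu> b * h b) \<le> (\<Sum>b\<in>UNIV. \<nu> b * (\<eta>^2 * exp (2*\<eta>) * (d b - m)^2))"
      using nupos by (intro sum_mono mult_left_mono) (auto simp: less_imp_le)
    then show "(\<Sum>b\<in>UNIV. \<nu> b * h b) \<le> \<eta>^2 * exp (2*\<eta>) * fexp \<nu> (\<lambda>b. (d b - m)^2)"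
      unfolding fexp_def by (simp add: sum_distrib_left algebra_simps)
  qed
  finally show ?thesis .
qed
theorem mainTheorem5:
  fixes r rt :: "'s \<Rightarrow> 'a \<Rightarrow> 'b::finite \<Rightarrow> real"
    and \<pi> :: "'s \<Rightarrow> 'b \<Rightarrow> 'a pmf"
    and \<eta> :: real and s :: 's
  assumes eta_pos: "\<eta> > 0"
    and r_range: "\<And>s a b. 0 \<le> r s a b \<and> r s a b \<le> 1"
    and rt_range: "\<And>s a b. 0 \<le> rt s a b \<and> rt s a b \<le> 1"
  shows
    "let \<nu> = softmax_resp \<eta> (avg_reward \<pi> r) s;
         \<nu>t = softmax_resp \<eta> (avg_reward \<pi> rt) s;
         d = (\<lambda>b. avg_reward \<pi> rt s b - avg_reward \<pi> r s b);
         m = fexp \<nu> d;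
         BA = 2 + 2 / \<eta> * ln (real CARD('b));
         C3 = \<eta>^2 * exp (2 * \<eta> * BA) / 2 * (2 + \<eta> * BA * exp (2 * \<eta> * BA))
     in tv_dist \<nu> \<nu>t \<le> \<eta> * fexp \<nu> (\<lambda>b. \<bar>d b - m\<bar>) + C3 * fexp \<nu> (\<lambda>b. (d b - m)^2)"
proof -
  define F where "F = avg_reward \<pi> r s"
  define G where "G = avg_reward \<pi> rt s"
  have Fb: "0 \<le> F b \<and> F b \<le> 1" for b
    unfolding F_def avg_reward_def by (rule pmf_exp_bounds) (use r_range in auto)
  have Gb: "0 \<le> G b \<and> G b \<le> 1" for b
    unfolding G_def avg_reward_def by (rule pmf_exp_bounds) (use rt_range in auto)
  have dG: "\<bar>G b - F b\<bar> \<le> 1" for b using Fb[of b] Gb[of b] by linarith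
  define \<nu> where "\<nu> = softmax_resp \<eta> (avg_reward \<pi> r) s"
  define \<nu>t where "\<nu>t = softmax_resp \<eta> (avg_reward \<pi> rt) s"
  define d where "d = (\<lambda>b. avg_reward \<pi> rt s b - avg_reward \<pi> r s b)"
  define m where "m = fexp \<nu> d"
  define BA where "BA = 2 + 2 / \<eta> * ln (real CARD('b))"
  define C3 where "C3 = \<eta>^2 * exp (2 * \<eta> * BA) / 2 * (2 + \<eta> * BA * exp (2 * \<eta> * BA))"
  have nu_eq: "\<nu> = (\<lambda>b. exp (\<eta> * F b) / (\<Sum>b\<in>UNIV. exp (\<eta> * F b)))"
    unfolding \<nu>_def F_def softmax_resp_def by auto
  have nut_eq: "\<nu>t = (\<lambda>b. exp (\<eta> * G b) / (\<Sum>b'\<in>UNIV. exp (\<eta> * G b')))"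
    unfolding \<nu>t_def G_def softmax_resp_def by auto
  have d_eq: "d = (\<lambda>b. G b - F b)" unfolding d_def F_def G_def by simp
  have core': "tv_dist \<nu> \<nu>t \<le> \<eta> * fexp \<nu> (\<lambda>b. \<bar>d b - m\<bar>) + \<eta>^2 * exp (2*\<eta>) * fexp \<nu> (\<lambda>b. (d b - m)^2)"
    unfolding nu_eq nut_eq d_eq m_def by (rule core[OF eta_pos dG])
  have nunn: "\<nu> b \<ge> 0" for b unfolding nu_eq by (auto intro!: divide_nonneg_nonneg sum_nonneg)
  have fnn: "0 \<le> fexp \<nu> (\<lambda>b. (d b - m)^2)" unfolding fexp_def using nunn by (auto intro!: sum_nonneg)
  have card1: "real CARD('b) \<ge> 1" by (simp add: Suc_le_eq)
  have BA2: "BA \<ge> 2" unfolding BA_def using eta_pos card1 by (simp add: ln_ge_zero)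
  have E: "exp (2 * \<eta>) \<le> exp (2 * \<eta> * BA)" using BA2 eta_pos by (simp add: mult_le_cancel_left1 mult.assoc)
  have C3ge: "\<eta>^2 * exp (2*\<eta>) \<le> C3"
  proof -
    have "\<eta>^2 * exp (2*\<eta>) \<le> \<eta>^2 * exp (2 * \<eta> * BA) / 2 * 2" using E by (simp add: mult_left_mono)
    also have "\<dots> \<le> C3" unfolding C3_def using eta_pos BA2
      by (intro mult_left_mono) (auto intro!: mult_nonneg_nonneg)
    finally show ?thesis .
  qed
  have "tv_dist \<nu> \<nu>t \<le> \<eta> * fexp \<nu> (\<lambda>b. \<bar>d b - m\<bar>) + C3 * fexp \<nu> (\<lambda>b. (d b - m)^2)"
    using core' mult_right_mono[OF C3ge fnn] by linarith
  then show ?thesis unfolding Let_def \<nu>_def[symmetric] \<nu>t_def[symmetric] d_def[symmetric]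
    m_def[symmetric] BA_def[symmetric] C3_def[symmetric] .
qed

end
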